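(* Let $A$ be a commutative nilpotent $\mathbb{F}_p$-algebra of finite dimension, with $A^e\neq0$ and $A^{e+1}=0$ for some $e\ge1$. With $N_t$, $q_t$, $s(\cdot)$, $i(\cdot)$ and $\delta(m)=\lfloor m^2/4\rfloor$ as defined below, \[ i(A)\le \sum_{t=1}^{e-1}\bigl(p^{-\delta(q_t)}-p^{-\delta(q_{t+1})}\bigr)s(N_t)+p^{-\delta(q_e)}s(N_e), \] where $i(A)$ is the number of ideals of $A$.
   Context: Algebras are commutative, associative, not necessarily unital. $N_k=\{a\in A: x_1\cdots x_k a=0\ \forall x_1,\dots,x_k\in A\}$ (so $N_0=0$, $N_e=A$). For $x\in A$, $q(x)=\dim_{\mathbb{F}_p}(\mathbb{F}_px+Ax)$ and $q_t=\min_{x\in N_t\setminus N_{t-1}}q(x)$. For a subspace $J$, $s(J)$ is the number of $\mathbb{F}_p$-subspaces of $J$. *)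

theory Defs
  imports Main "HOL.Real" "HOL-Computational_Algebra.Primes"
begin

text \<open>The algebra A is the whole (finite) type 'a, a commutative, associative,
not necessarily unital ring (class comm_ring). An F_p-algebra structure is
equivalent to the additive group having exponent p; F_p-subspaces are then
exactly additive subgroups.\<close>

definition char_exp :: "nat \<Rightarrow> 'a::comm_ring itself \<Rightarrow> bool" where
  "char_exp p _ \<longleftrightarrow> (\<forall>x::'a. (\<Sum>i<p. x) = 0)"

definition nprod :: "'a::comm_ring \<Rightarrow> 'a list \<Rightarrow> 'a" where
  "nprod x xs = foldr (*) xs x"

definition Nset :: "nat \<Rightarrow> 'a::comm_ring set" where
  "Nset k = {a. \<forall>xs. length xs = k \<longrightarrow> nprod a xs = 0}"

definition subspace :: "'a::comm_ring set \<Rightarrow> bool" where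
  "subspace S \<longleftrightarrow> 0 \<in> S \<and> (\<forall>x\<in>S. \<forall>y\<in>S. x + y \<in> S) \<and> (\<forall>x\<in>S. - x \<in> S)"

definition is_ideal :: "'a::comm_ring set \<Rightarrow> bool" where
  "is_ideal I \<longleftrightarrow> subspace I \<and> (\<forall>a. \<forall>x\<in>I. a * x \<in> I)"

text \<open>Subspace spanned by B (= additive subgroup generated, since char p).\<close>
inductive_set span :: "'a::comm_ring set \<Rightarrow> 'a set" for B where
  span_zero: "0 \<in> span B"
| span_base: "b \<in> B \<Longrightarrow> b \<in> span B"
| span_add: "x \<in> span B \<Longrightarrow> y \<in> span B \<Longrightarrow> x + y \<in> span B"
| span_neg: "x \<in> span B \<Longrightarrow> - x \<in> span B"

definition fdim :: "'a::comm_ring set \<Rightarrow> nat" where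
  "fdim S = (LEAST n. \<exists>B. finite B \<and> card B = n \<and> B \<subseteq> S \<and> span B = S)"

definition qdim :: "'a::comm_ring \<Rightarrow> nat" where
  "qdim x = fdim (span (insert x (range (\<lambda>a. a * x))))"

definition qmin :: "nat \<Rightarrow> 'a::comm_ring itself \<Rightarrow> nat" where
  "qmin t _ = Min (qdim ` (Nset t - Nset (t - 1) :: 'a set))"

definition num_sub :: "'a::comm_ring set \<Rightarrow> nat" where
  "num_sub J = card {S. S \<subseteq> J \<and> subspace S}"

definition num_ideals :: "'a::comm_ring itself \<Rightarrow> nat" where
  "num_ideals _ = card {I :: 'a set. is_ideal I}"

definition delta :: "nat \<Rightarrow> nat" where
  "delta m = m^2 div 4"

end

theory Submission
  imports Defs "HOL-Number_Theory.Cong" "HOL-Library.FuncSet"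
begin


fun smul :: "nat \<Rightarrow> 'a::comm_ring \<Rightarrow> 'a" where
  "smul 0 x = 0"
| "smul (Suc n) x = x + smul n x"

lemma smul_add_nat: "smul (m + n) x = smul m x + smul n x"
  by (induction m) (auto simp: algebra_simps)

lemma smul_mult_nat: "smul (m * n) x = smul m (smul n x)"
  by (induction m) (auto simp: smul_add_nat)

lemma smul_add: "smul n (x + y) = smul n x + smul n y"
  by (induction n) (auto simp: algebra_simps)

lemma smul_neg: "smul n (- x) = - smul n x"
  by (induction n) (auto simp: algebra_simps)

lemma smul_zero[simp]: "smul n 0 = 0"
  by (induction n) auto

lemma smul_one[simp]: "smul (Suc 0) x = x"
  by simp

lemma smul_mult_left: "smul n (a * x) = a * smul n x"
  by (induction n) (auto simp: algebra_simps)

lemma smul_mult_left2: "smul n a * x = smul n (a * x)"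
  by (induction n) (auto simp: algebra_simps)

lemma sum_smul: "(\<Sum>i<n. x) = smul n x"
  by (induction n) (auto simp: algebra_simps)

lemma smul_diff_nat: "c \<le> d \<Longrightarrow> smul d x = smul c x + smul (d - c) x"
  by (metis le_add_diff_inverse smul_add_nat)

lemma subspace_0: "subspace S \<Longrightarrow> 0 \<in> S" by (simp add: subspace_def)
lemma subspace_add: "subspace S \<Longrightarrow> x \<in> S \<Longrightarrow> y \<in> S \<Longrightarrow> x + y \<in> S" by (simp add: subspace_def)
lemma subspace_neg: "subspace S \<Longrightarrow> x \<in> S \<Longrightarrow> - x \<in> S" by (simp add: subspace_def)
lemma subspace_diff: "subspace S \<Longrightarrow> x \<in> S \<Longrightarrow> y \<in> S \<Longrightarrow> x - y \<in> S"
  by (metis diff_conv_add_uminus subspace_add subspace_neg)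
lemma subspace_smul: "subspace S \<Longrightarrow> x \<in> S \<Longrightarrow> smul n x \<in> S"
  by (induction n) (auto simp: subspace_0 subspace_add)

lemma subspace_span: "subspace (span B)"
  by (auto simp: subspace_def intro: span.intros)

lemma span_least: "B \<subseteq> S \<Longrightarrow> subspace S \<Longrightarrow> span B \<subseteq> S"
proof
  fix x assume "x \<in> span B" "B \<subseteq> S" "subspace S"
  then show "x \<in> S" by (induction rule: span.induct) (auto simp: subspace_def)
qed

lemma span_sup: "B \<subseteq> span B"
  by (auto intro: span.intros)

lemma span_mono: "B \<subseteq> C \<Longrightarrow> span B \<subseteq> span C"
  by (meson order.trans span_least span_sup subspace_span)

lemma span_subspace: "subspace S \<Longrightarrow> span S = S"
  by (simp add: span_least span_sup subset_antisym)

lemma subspace_Int: "subspace S \<Longrightarrow> subspace T \<Longrightarrow> subspace (S \<inter> T)"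
  by (auto simp: subspace_def)

definition ssum :: "'a::comm_ring set \<Rightarrow> 'a set \<Rightarrow> 'a set" where
  "ssum X Y = {a + b | a b. a \<in> X \<and> b \<in> Y}"

lemma subspace_ssum: assumes "subspace X" "subspace Y" shows "subspace (ssum X Y)"
  unfolding subspace_def
proof (intro conjI ballI)
  have "(0::'a) = 0 + 0" by simp
  then show "0 \<in> ssum X Y" unfolding ssum_def using subspace_0[OF assms(1)] subspace_0[OF assms(2)] by blast
next
  fix x y assume "x \<in> ssum X Y" "y \<in> ssum X Y"
  then obtain a b c d where "x = a + b" "y = c + d" "a \<in> X" "b \<in> Y" "c \<in> X" "d \<in> Y"
    unfolding ssum_def by blast
  then have "x + y = (a + c) + (b + d)" "a + c \<in> X" "b + d \<in> Y"
    using assms by (auto simp: algebra_simps subspace_add)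
  then show "x + y \<in> ssum X Y" unfolding ssum_def by blast
next
  fix x assume "x \<in> ssum X Y"
  then obtain a b where "x = a + b" "a \<in> X" "b \<in> Y"
    unfolding ssum_def by blast
  then have "- x = (- a) + (- b)" "- a \<in> X" "- b \<in> Y"
    using assms by (auto simp: algebra_simps subspace_neg)
  then show "- x \<in> ssum X Y" unfolding ssum_def by blast
qed

lemma ssum_sub: "X \<subseteq> S \<Longrightarrow> Y \<subseteq> S \<Longrightarrow> subspace S \<Longrightarrow> ssum X Y \<subseteq> S"
  by (auto simp: ssum_def intro!: subspace_add)

lemma ssum_left: "subspace Y \<Longrightarrow> X \<subseteq> ssum X Y"
  by (force simp: ssum_def subspace_0)

lemma ssum_right: "subspace X \<Longrightarrow> Y \<subseteq> ssum X Y"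
  by (force simp: ssum_def subspace_0)

locale fpalg =
  fixes p :: nat and ty :: "'a::{comm_ring,finite} itself"
  assumes prime: "prime p"
    and charp: "\<And>x::'a. smul p x = 0"
begin

lemma p_gt1: "1 < p" using prime prime_gt_1_nat by blast

lemma smul_mod: "smul n (x::'a) = smul (n mod p) x"
proof -
  have "smul n x = smul ((n div p) * p + n mod p) x" by simp
  also have "\<dots> = smul (n div p) (smul p x) + smul (n mod p) x" by (simp only: smul_add_nat smul_mult_nat)
  also have "\<dots> = smul (n mod p) x" by (simp add: charp)
  finally show ?thesis .
qed

lemma smul_inv: assumes "c mod p \<noteq> 0" shows "\<exists>k. \<forall>x::'a. smul k (smul c x) = x"
proof -
  have "coprime c p"
    using assms prime by (metis dvd_eq_mod_eq_0 prime_imp_coprime_nat coprime_commute)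
  then obtain k where k: "[c * k = Suc 0] (mod p)" using cong_solve_coprime_nat by blast
  have "(k * c) mod p = Suc 0" using k p_gt1 unfolding cong_def by (simp add: mult.commute)
  have "smul k (smul c x) = x" for x::'a
  proof -
    have "smul k (smul c x) = smul (k * c) x" by (simp add: smul_mult_nat)
    also have "\<dots> = smul ((k * c) mod p) x" by (rule smul_mod)
    also have "\<dots> = x" using \<open>(k * c) mod p = Suc 0\<close> by simp
    finally show ?thesis .
  qed
  then show ?thesis by blast
qed

lemma smul_neg_p: "- smul c (x::'a) = smul (p - c mod p) x"
proof -
  have pp: "p - c mod p + c mod p = p" using p_gt1 by (simp add: less_imp_le)
  have "smul (p - c mod p) x + smul c x = smul (p - c mod p) x + smul (c mod p) x"
    using smul_mod by metis
  also have "\<dots> = smul (p - c mod p + c mod p) x" by (simp only: smul_add_nat)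
  also have "\<dots> = 0" by (simp only: pp charp)
  finally show ?thesis by (metis add_eq_0_iff2 add.commute)
qed

lemma subspace_smul_cancel:
  assumes "subspace S" "smul c (x::'a) \<in> S" "c mod p \<noteq> 0" shows "x \<in> S"
  using smul_inv[OF assms(3)] subspace_smul[OF assms(1,2)] by metis

end



context fpalg
begin

definition line :: "'a set \<Rightarrow> 'a \<Rightarrow> 'a set" where
  "line X u = (\<lambda>(v, c). v + smul c u) ` (X \<times> {..<p})"

lemma span_insert_eq:
  assumes X: "subspace (X::'a set)" shows "span (insert u X) = line X u"
proof
  have sub: "subspace (line X u)"
    unfolding subspace_def
  proof (intro conjI ballI)
    show "0 \<in> line X u" unfolding line_def using subspace_0[OF X] p_gt1
      by (auto intro!: image_eqI[where x="(0,0)"])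
  next
    fix x y assume "x \<in> line X u" "y \<in> line X u"
    then obtain a c b d where "x = a + smul c u" "y = b + smul d u" "a \<in> X" "b \<in> X"
      unfolding line_def by auto
    then have "x + y = (a + b) + smul ((c + d) mod p) u" "a + b \<in> X" "(c + d) mod p < p"
      using X p_gt1 by (auto simp: subspace_add smul_add_nat algebra_simps smul_mod[symmetric])
    then show "x + y \<in> line X u" unfolding line_def by (auto intro!: image_eqI[where x="(a+b, (c + d) mod p)"])
  next
    fix x assume "x \<in> line X u"
    then obtain a c where "x = a + smul c u" "a \<in> X"
      unfolding line_def by auto
    then have "- x = (- a) + smul ((p - c mod p) mod p) u" "- a \<in> X" "(p - c mod p) mod p < p"
      using X p_gt1 by (auto simp: subspace_neg smul_neg_p smul_mod[symmetric])
    then show "- x \<in> line X u" unfolding line_def by (auto intro!: image_eqI[where x="(- a, (p - c mod p) mod p)"])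
  qed
  have "insert u X \<subseteq> line X u"
  proof
    fix y assume "y \<in> insert u X"
    then show "y \<in> line X u"
    proof
      assume "y = u" then show ?thesis unfolding line_def using subspace_0[OF X] p_gt1
        by (auto intro!: image_eqI[where x="(0, 1)"])
    next
      assume "y \<in> X" then show ?thesis unfolding line_def using p_gt1
        by (auto intro!: image_eqI[where x="(y, 0)"])
    qed
  qed
  then show "span (insert u X) \<subseteq> line X u" using sub span_least by blast
next
  show "line X u \<subseteq> span (insert u X)"
  proof
    fix y assume "y \<in> line X u"
    then obtain a c where "y = a + smul c u" "a \<in> X" unfolding line_def by auto
    then show "y \<in> span (insert u X)"
      by (meson insertI1 insertI2 span.span_add span.span_base subspace_smul subspace_span)
  qed
qed

lemma line_inj:
  assumes X: "subspace (X::'a set)" and u: "u \<notin> X"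
  shows "inj_on (\<lambda>(v, c). v + smul c u) (X \<times> {..<p})"
proof (rule inj_onI, clarsimp)
  fix a c b d assume ab: "a \<in> X" "b \<in> X" "c < p" "d < p" "a + smul c u = b + smul d u"
  have key: "c = d" if "a \<in> X" "b \<in> X" "c < p" "d < p" "a + smul c u = b + smul d u" "c \<le> d"
    for a b :: 'a and c d
  proof (rule ccontr)
    assume "c \<noteq> d"
    then have "0 < d - c" "d - c < p" using that by auto
    then have m: "(d - c) mod p \<noteq> 0" by simp
    have "smul d u = smul c u + smul (d - c) u" using smul_diff_nat[OF that(6)] .
    then have "smul (d - c) u = a - b" using that(5) by (simp add: algebra_simps)
    then have "smul (d - c) u \<in> X" using subspace_diff[OF X that(1,2)] by simp
    then have "u \<in> X" using subspace_smul_cancel[OF X _ m] by blast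
    then show False using u by blast
  qed
  have "c = d"
  proof (cases "c \<le> d")
    case True then show ?thesis using key ab by blast
  next
    case False then show ?thesis using key[of b a d c] ab by auto
  qed
  then show "a = b \<and> c = d" using ab by simp
qed

lemma card_span_insert:
  assumes X: "subspace (X::'a set)" and u: "u \<notin> X"
  shows "card (span (insert u X)) = p * card X"
proof -
  have "card (span (insert u X)) = card (X \<times> {..<p})"
    unfolding span_insert_eq[OF X] line_def using card_image[OF line_inj[OF X u]] .
  then show ?thesis by (simp add: card_cartesian_product)
qed

lemma hyperplane:
  assumes X: "subspace (X::'a set)" and nz: "X \<noteq> {0}"
  shows "\<exists>X' u. subspace X' \<and> X' \<subseteq> X \<and> u \<in> X \<and> u \<notin> X' \<and> span (insert u X') = X"
proof -
  let ?P = "{Y. subspace Y \<and> Y \<subseteq> X \<and> Y \<noteq> X}"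
  have "{0} \<in> ?P" using X nz subspace_0[OF X] by (auto simp: subspace_def)
  moreover have "finite ?P" by simp
  ultimately obtain Y where Y: "Y \<in> ?P" and max: "\<forall>Z\<in>?P. Y \<le> Z \<longrightarrow> Y = Z"
    using finite_has_maximal[of ?P] by blast
  then obtain u where u: "u \<in> X" "u \<notin> Y" by blast
  have sY: "subspace Y" and YX: "Y \<subseteq> X" using Y by auto
  have "span (insert u Y) \<subseteq> X" using span_least[OF _ X] u YX by blast
  moreover have "span (insert u Y) = X"
  proof (rule ccontr)
    assume ne: "span (insert u Y) \<noteq> X"
    have "Y \<subseteq> span (insert u Y)" using span_sup by blast
    with ne \<open>span (insert u Y) \<subseteq> X\<close> have "Y = span (insert u Y)" using max subspace_span by blast
    then show False using u span_sup by blast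
  qed
  ultimately show ?thesis using sY YX u by blast
qed

lemma card_subspace_pos: "subspace (X::'a set) \<Longrightarrow> card X > 0"
  using subspace_0 card_gt_0_iff by fastforce

lemma dim_exists:
  "subspace (X::'a set) \<Longrightarrow> \<exists>B j. finite B \<and> B \<subseteq> X \<and> span B = X \<and> card B = j \<and> card X = p ^ j"
proof (induction "card X" arbitrary: X rule: less_induct)
  case less
  show ?case
  proof (cases "X = {0}")
    case True
    have "span {} = ({0}::'a set)"
      using span_least[of "{}" "{0}"] span.span_zero by (auto simp: subspace_def)
    then show ?thesis using True by (intro exI[of _ "{}"] exI[of _ 0]) auto
  next
    case False
    then obtain X' u where h: "subspace X'" "X' \<subseteq> X" "u \<in> X" "u \<notin> X'" "span (insert u X') = X"
      using hyperplane less.prems by blast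
    have cX: "card X = p * card X'" using card_span_insert[OF h(1,4)] h(5) by simp
    have "card X' < card X" using cX p_gt1 card_subspace_pos[OF h(1)] by simp
    then obtain B j where B: "finite B" "B \<subseteq> X'" "span B = X'" "card B = j" "card X' = p ^ j"
      using less.hyps h(1) by blast
    have "span (insert u B) = X"
    proof
      show "span (insert u B) \<subseteq> X" using span_least[OF _ less.prems] B h by blast
      have "insert u X' \<subseteq> span (insert u B)"
        using B(3) span_mono[of B "insert u B"] span_sup[of "insert u B"] by blast
      then show "X \<subseteq> span (insert u B)" unfolding h(5)[symmetric]
        using span_least subspace_span by blast
    qed
    moreover have "u \<notin> B" using B(2) h(4) by blast
    then have "card (insert u B) = Suc j" using B(1,4) by simp
    ultimately show ?thesis using B h cX
      by (intro exI[of _ "insert u B"] exI[of _ "Suc j"]) auto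
  qed
qed

lemma pow_inj: "p ^ i = p ^ j \<Longrightarrow> i = j"
  using p_gt1 by (simp add: power_inject_exp)

lemma fdim_le: assumes "subspace (X::'a set)" "card X = p ^ j" shows "fdim X \<le> j"
proof -
  obtain B j' where B: "finite B" "B \<subseteq> X" "span B = X" "card B = j'" "card X = p ^ j'"
    using dim_exists[OF assms(1)] by blast
  then have "j' = j" using assms(2) pow_inj by simp
  then show ?thesis unfolding fdim_def using B by (intro Least_le) blast
qed

lemma card_subspace_pow: "subspace (X::'a set) \<Longrightarrow> \<exists>j. card X = p ^ j"
  using dim_exists by blast

lemma sub_of_size:
  "subspace (H::'a set) \<Longrightarrow> card H = p ^ n \<Longrightarrow> k \<le> n \<Longrightarrow> \<exists>Y. subspace Y \<and> Y \<subseteq> H \<and> card Y = p ^ k"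
proof (induction n arbitrary: H)
  case 0 then show ?case by auto
next
  case (Suc n)
  show ?case
  proof (cases "k = Suc n")
    case True then show ?thesis using Suc.prems by auto
  next
    case False
    have "card H > 1" using Suc.prems(2) p_gt1 one_less_power[of p "Suc n"] by simp
    then have "H \<noteq> {0}" by auto
    then obtain X' u where h: "subspace X'" "X' \<subseteq> H" "u \<in> H" "u \<notin> X'" "span (insert u X') = H"
      using hyperplane Suc.prems by blast
    have "card H = p * card X'" using card_span_insert[OF h(1,4)] h(5) by simp
    then have "card X' = p ^ n" using Suc.prems(2) p_gt1 by simp
    then obtain Y where "subspace Y" "Y \<subseteq> X'" "card Y = p ^ k"
      using Suc.IH[OF h(1)] False Suc.prems(3) by fastforce
    then show ?thesis using h by blast
  qed
qed

end


context fpalg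
begin

lemma ssum_eq_image: "ssum X Y = (\<lambda>(a, b). a + b) ` (X \<times> Y)"
  unfolding ssum_def by auto

lemma card_ssum:
  assumes X: "subspace (X::'a set)" and Y: "subspace Y" and XY: "X \<inter> Y = {0}"
  shows "card (ssum X Y) = card X * card Y"
proof -
  have "inj_on (\<lambda>(a, b). a + b) (X \<times> Y)"
  proof (rule inj_onI, clarsimp)
    fix a b a' b' assume h: "a \<in> X" "b \<in> Y" "a' \<in> X" "b' \<in> Y" "a + b = a' + b'"
    have "a - a' = b' - b" using h(5) by (simp add: algebra_simps)
    moreover have "a - a' \<in> X" "b' - b \<in> Y" using h X Y subspace_diff by auto
    ultimately have "b' - b \<in> X \<inter> Y" by simp
    then have "b' - b = 0" using XY by blast
    then have "a - a' = 0" "b' - b = 0" using \<open>a - a' = b' - b\<close> by auto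
    then show "a = a' \<and> b = b'" by simp
  qed
  then show ?thesis unfolding ssum_eq_image by (simp add: card_image card_cartesian_product)
qed

lemma complement:
  assumes W: "subspace (W::'a set)" and Y: "subspace Y" and YW: "Y \<subseteq> W"
  shows "subspace Z \<Longrightarrow> Z \<subseteq> W \<Longrightarrow> Z \<inter> Y = {0} \<Longrightarrow>
    \<exists>X. subspace X \<and> Z \<subseteq> X \<and> X \<subseteq> W \<and> X \<inter> Y = {0} \<and> ssum X Y = W"
proof (induction "card W - card Z" arbitrary: Z rule: less_induct)
  case less
  have sZY: "subspace (ssum Z Y)" using subspace_ssum less.prems(1) Y by blast
  have ZYW: "ssum Z Y \<subseteq> W" using ssum_sub less.prems(2) YW W by blast
  show ?case
  proof (cases "ssum Z Y = W")
    case True then show ?thesis using less.prems by blast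
  next
    case False
    then obtain w where w: "w \<in> W" "w \<notin> ssum Z Y" using ZYW by blast
    have wZ: "w \<notin> Z" using w ssum_left[OF Y] by blast
    let ?Z = "span (insert w Z)"
    have sZ': "subspace ?Z" by (rule subspace_span)
    have Z'W: "?Z \<subseteq> W" using span_least[OF _ W] w less.prems(2) by blast
    have ZZ': "Z \<subseteq> ?Z" using span_sup by blast
    have cZ': "card ?Z = p * card Z" using card_span_insert[OF less.prems(1) wZ] .
    have int: "?Z \<inter> Y = {0}"
    proof
      show "{0} \<subseteq> ?Z \<inter> Y" using subspace_0[OF sZ'] subspace_0[OF Y] by auto
      show "?Z \<inter> Y \<subseteq> {0}"
      proof
        fix v assume v: "v \<in> ?Z \<inter> Y"
        then obtain a c where ac: "v = a + smul c w" "a \<in> Z" "c < p"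
          unfolding span_insert_eq[OF less.prems(1)] line_def by auto
        show "v \<in> {0}"
        proof (cases "c = 0")
          case True then show ?thesis using ac v less.prems(3) by auto
        next
          case False
          then have cm: "c mod p \<noteq> 0" using ac by simp
          have "smul c w = (- a) + v" using ac by (simp add: algebra_simps)
          then have "smul c w \<in> ssum Z Y" unfolding ssum_def
            using ac v subspace_neg[OF less.prems(1)] by blast
          then have "w \<in> ssum Z Y" using subspace_smul_cancel[OF sZY _ cm] by blast
          then show ?thesis using w by blast
        qed
      qed
    qed
    have "card ?Z \<le> card W" using Z'W by (simp add: card_mono)
    moreover have "card Z < card ?Z" using cZ' p_gt1 card_subspace_pos[OF less.prems(1)] by simp
    ultimately have "card W - card ?Z < card W - card Z" by simp
    then obtain X where "subspace X \<and> ?Z \<subseteq> X \<and> X \<subseteq> W \<and> X \<inter> Y = {0} \<and> ssum X Y = W"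
      using less.hyps[OF _ sZ' Z'W int] by blast
    then show ?thesis using ZZ' by blast
  qed
qed

definition homs :: "'a set \<Rightarrow> 'a set \<Rightarrow> ('a \<Rightarrow> 'a) set" where
  "homs X Y = {f \<in> X \<rightarrow>\<^sub>E Y. \<forall>a\<in>X. \<forall>b\<in>X. f (a + b) = f a + f b}"

lemma finite_homs: "finite (homs X Y)"
proof -
  have "finite (X \<rightarrow>\<^sub>E Y)" by (intro finite_PiE) auto
  then show ?thesis unfolding homs_def by simp
qed

lemma hom_zero: assumes "f \<in> homs X Y" "subspace X" shows "f 0 = 0"
proof -
  have "f (0 + 0) = f 0 + f 0" using assms subspace_0[OF assms(2)] unfolding homs_def by blast
  then show ?thesis by simp
qed

lemma hom_count:
  "subspace (X::'a set) \<Longrightarrow> subspace Y \<Longrightarrow> card X = p ^ j \<Longrightarrow> card Y ^ j \<le> card (homs X Y)"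
proof (induction j arbitrary: X)
  case 0
  then obtain a where "X = {a}" using card_1_singletonE by auto
  then have "X = {0}" using subspace_0[OF "0.prems"(1)] by simp
  then have "restrict (\<lambda>_. 0) X \<in> homs X Y" unfolding homs_def using subspace_0[OF "0.prems"(2)] by auto
  then have "homs X Y \<noteq> {}" by blast
  then show ?case using finite_homs by (simp add: Suc_leI card_gt_0_iff)
next
  case (Suc j)
  have "card X > 1" using Suc.prems(3) p_gt1 one_less_power[of p "Suc j"] by simp
  then have "X \<noteq> {0}" by auto
  then obtain X' u where h: "subspace X'" "X' \<subseteq> X" "u \<in> X" "u \<notin> X'" "span (insert u X') = X"
    using hyperplane Suc.prems by blast
  have "card X = p * card X'" using card_span_insert[OF h(1,4)] h(5) by simp
  then have cX': "card X' = p ^ j" using Suc.prems(3) p_gt1 by simp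
  have IH: "card Y ^ j \<le> card (homs X' Y)" using Suc.IH[OF h(1) Suc.prems(2) cX'] .
  have Xeq: "X = line X' u" using span_insert_eq[OF h(1)] h(5) by simp
  define ext :: "('a \<Rightarrow> 'a) \<times> 'a \<Rightarrow> 'a \<Rightarrow> 'a" where "ext = (\<lambda>(f, y). restrict (\<lambda>w. SOME z. \<exists>v\<in>X'. \<exists>c. w = v + smul c u \<and> z = f v + smul c y) X)"
  have uniq: "f v + smul c y = f v' + smul c' y"
    if "v \<in> X'" "v' \<in> X'" "v + smul c u = v' + smul c' u" for f v v' c c' and y :: 'a
  proof -
    have "v + smul (c mod p) u = v' + smul (c' mod p) u" using that(3) smul_mod[of c u] smul_mod[of c' u] by simp
    moreover have "c mod p < p" "c' mod p < p" using p_gt1 by auto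
    ultimately have "(v, c mod p) = (v', c' mod p)"
      using inj_onD[OF line_inj[OF h(1,4)], of "(v, c mod p)" "(v', c' mod p)"] that(1,2) by auto
    then have "v = v' \<and> c mod p = c' mod p" by simp
    then show ?thesis using smul_mod[of c y] smul_mod[of c' y] by simp
  qed
  have ext_val: "ext (f, y) (v + smul c u) = f v + smul c y" if "v \<in> X'" for f y v c
  proof -
    have mem: "v + smul c u \<in> X" using that h
      by (meson insertI1 insertI2 span.span_add span.span_base subspace_smul subspace_span)
    have "(SOME z. \<exists>v'\<in>X'. \<exists>c'. v + smul c u = v' + smul c' u \<and> z = f v' + smul c' y) = f v + smul c y"
    proof (rule some_equality)
      show "\<exists>v'\<in>X'. \<exists>c'. v + smul c u = v' + smul c' u \<and> f v + smul c y = f v' + smul c' y" using that by blast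
    next
      fix z assume "\<exists>v'\<in>X'. \<exists>c'. v + smul c u = v' + smul c' u \<and> z = f v' + smul c' y"
      then obtain v' c' where "v' \<in> X'" "v + smul c u = v' + smul c' u" "z = f v' + smul c' y" by blast
      then show "z = f v + smul c y" using uniq[OF that, of v' c c' f y] by simp
    qed
    then show ?thesis unfolding ext_def using mem by simp
  qed
  have decomp: "\<exists>v c. v \<in> X' \<and> w = v + smul c u" if "w \<in> X" for w
    using that unfolding Xeq line_def by auto
  have ext_in: "ext (f, y) \<in> homs X Y" if f: "f \<in> homs X' Y" and y: "y \<in> Y" for f y
  proof -
    have fY: "f v \<in> Y" if "v \<in> X'" for v using f that unfolding homs_def by auto
    have fadd: "f (a + b) = f a + f b" if "a \<in> X'" "b \<in> X'" for a b using f that unfolding homs_def by auto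
    have "ext (f, y) \<in> X \<rightarrow>\<^sub>E Y"
    proof
      fix w assume "w \<in> X"
      then obtain v c where "v \<in> X'" "w = v + smul c u" using decomp by blast
      then show "ext (f, y) w \<in> Y" using ext_val fY subspace_add[OF Suc.prems(2)] subspace_smul[OF Suc.prems(2) y] by simp
    next
      fix w assume "w \<notin> X" then show "ext (f, y) w = undefined" unfolding ext_def by simp
    qed
    moreover have "\<forall>a\<in>X. \<forall>b\<in>X. ext (f, y) (a + b) = ext (f, y) a + ext (f, y) b"
    proof (intro ballI)
      fix a b assume ab: "a \<in> X" "b \<in> X"
      obtain v c where v: "v \<in> X'" "a = v + smul c u" using decomp ab by blast
      obtain v' c' where v': "v' \<in> X'" "b = v' + smul c' u" using decomp ab by blast
      have "a + b = (v + v') + smul (c + c') u" using v v' by (simp add: smul_add_nat algebra_simps)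
      moreover have "v + v' \<in> X'" using subspace_add[OF h(1) v(1) v'(1)] .
      ultimately have "ext (f, y) (a + b) = f (v + v') + smul (c + c') y" using ext_val by simp
      also have "\<dots> = (f v + smul c y) + (f v' + smul c' y)" using fadd v v' by (simp add: smul_add_nat algebra_simps)
      finally show "ext (f, y) (a + b) = ext (f, y) a + ext (f, y) b" using ext_val v v' by simp
    qed
    ultimately show ?thesis unfolding homs_def mem_Collect_eq by (intro conjI)
  qed
  have inj: "inj_on ext (homs X' Y \<times> Y)"
  proof (rule inj_onI, clarify)
    fix f y g z assume f: "f \<in> homs X' Y" "y \<in> Y" and g: "g \<in> homs X' Y" "z \<in> Y"
      and eq: "ext (f, y) = ext (g, z)"
    have fg: "f v = g v" if "v \<in> X'" for v
    proof -
      have "f v = ext (f, y) (v + smul 0 u)" using ext_val[OF that, of f y 0] by simp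
      also have "\<dots> = ext (g, z) (v + smul 0 u)" using eq by simp
      also have "\<dots> = g v" using ext_val[OF that, of g z 0] by simp
      finally show ?thesis .
    qed
    have "f \<in> X' \<rightarrow>\<^sub>E Y" "g \<in> X' \<rightarrow>\<^sub>E Y" using f g unfolding homs_def by auto
    then have "f = g" using PiE_ext fg by blast
    moreover have "y = z"
    proof -
      have e1: "ext (f, y) (0 + smul (Suc 0) u) = f 0 + smul (Suc 0) y"
        using ext_val[OF subspace_0[OF h(1)], of f y "Suc 0"] .
      have e2: "ext (g, z) (0 + smul (Suc 0) u) = g 0 + smul (Suc 0) z"
        using ext_val[OF subspace_0[OF h(1)], of g z "Suc 0"] .
      have "f 0 = 0" "g 0 = 0" using hom_zero[OF f(1) h(1)] hom_zero[OF g(1) h(1)] by auto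
      then show ?thesis using e1 e2 eq by (simp only: smul_one add_0)
    qed
    ultimately show "f = g \<and> y = z" by blast
  qed
  have "card Y ^ Suc j = card Y ^ j * card Y" by (simp add: mult.commute)
  also have "\<dots> \<le> card (homs X' Y) * card Y" using IH by (rule mult_le_mono1)
  also have "\<dots> = card (homs X' Y \<times> Y)" by (simp add: card_cartesian_product)
  also have "\<dots> \<le> card (homs X Y)"
  proof -
    have "ext ` (homs X' Y \<times> Y) \<subseteq> homs X Y" using ext_in by auto
    then show ?thesis using card_inj_on_le[OF inj _ finite_homs] by blast
  qed
  finally show ?case .
qed

end


context fpalg
begin

lemma graph_count:
  assumes W: "subspace (W::'a set)" and X: "subspace X" and Y: "subspace Y" and H: "subspace H"
    and XW: "X \<subseteq> W" and YW: "Y \<subseteq> W" and XY: "X \<inter> Y = {0}" and YH: "Y \<subseteq> H"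
    and x: "x \<in> X" "x \<notin> H"
  shows "card (homs X Y) \<le> card {S. subspace S \<and> S \<subseteq> W \<and> \<not> S \<subseteq> H}"
proof -
  define G where "G = (\<lambda>f. (\<lambda>a. a + f a) ` X)"
  have fin: "finite {S::'a set. subspace S \<and> S \<subseteq> W \<and> \<not> S \<subseteq> H}" by simp
  have into: "G f \<in> {S. subspace S \<and> S \<subseteq> W \<and> \<not> S \<subseteq> H}" if f: "f \<in> homs X Y" for f
  proof -
    have fY: "f a \<in> Y" if "a \<in> X" for a using f that unfolding homs_def by auto
    have fadd: "f (a + b) = f a + f b" if "a \<in> X" "b \<in> X" for a b using f that unfolding homs_def by auto
    have f0: "f 0 = 0" using hom_zero[OF f X] .
    have fneg: "f (- a) = - f a" if "a \<in> X" for a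
    proof -
      have "f a + f (- a) = f (a + - a)" using fadd[OF that subspace_neg[OF X that]] by simp
      then have "f a + f (- a) = 0" using f0 by simp
      then show ?thesis by (simp add: eq_neg_iff_add_eq_0 add.commute)
    qed
    have "subspace (G f)" unfolding subspace_def G_def
    proof (intro conjI ballI)
      show "0 \<in> (\<lambda>a. a + f a) ` X" using f0 subspace_0[OF X] by (auto intro!: image_eqI[where x=0])
    next
      fix s t assume "s \<in> (\<lambda>a. a + f a) ` X" "t \<in> (\<lambda>a. a + f a) ` X"
      then obtain a b where ab: "a \<in> X" "b \<in> X" "s = a + f a" "t = b + f b" by blast
      then have "s + t = (a + b) + f (a + b)" using fadd by (simp add: algebra_simps)
      then show "s + t \<in> (\<lambda>a. a + f a) ` X" using subspace_add[OF X ab(1,2)] by blast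
    next
      fix s assume "s \<in> (\<lambda>a. a + f a) ` X"
      then obtain a where a: "a \<in> X" "s = a + f a" by blast
      then have "- s = (- a) + f (- a)" using fneg by (simp add: algebra_simps)
      then show "- s \<in> (\<lambda>a. a + f a) ` X" using subspace_neg[OF X a(1)] by blast
    qed
    moreover have "G f \<subseteq> W" unfolding G_def using XW YW fY subspace_add[OF W] by blast
    moreover have "\<not> G f \<subseteq> H"
    proof
      assume "G f \<subseteq> H"
      then have "x + f x \<in> H" unfolding G_def using x by blast
      moreover have "f x \<in> H" using fY[OF x(1)] YH by blast
      ultimately have "(x + f x) - f x \<in> H" using subspace_diff[OF H] by blast
      then show False using x by simp
    qed
    ultimately show ?thesis by blast
  qed
  have inj: "inj_on G (homs X Y)"
  proof (rule inj_onI)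
    fix f g assume f: "f \<in> homs X Y" and g: "g \<in> homs X Y" and eq: "G f = G g"
    have "f a = g a" if a: "a \<in> X" for a
    proof -
      have "a + f a \<in> G g" using eq a unfolding G_def by blast
      then obtain b where b: "b \<in> X" "a + f a = b + g b" unfolding G_def by blast
      have "a - b = g b - f a" using b(2) by (simp add: algebra_simps)
      moreover have "a - b \<in> X" using subspace_diff[OF X a b(1)] .
      moreover have "g b \<in> Y" "f a \<in> Y" using f g a b(1) unfolding homs_def by (auto simp: PiE_mem)
      then have "g b - f a \<in> Y" using subspace_diff[OF Y] by blast
      ultimately have "g b - f a \<in> X \<inter> Y" by simp
      then have "g b - f a = 0" "a - b = 0" using XY \<open>a - b = g b - f a\<close> by auto
      then show ?thesis by simp
    qed
    moreover have "f \<in> X \<rightarrow>\<^sub>E Y" "g \<in> X \<rightarrow>\<^sub>E Y" using f g unfolding homs_def by auto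
    ultimately show "f = g" using PiE_ext by blast
  qed
  have "G ` homs X Y \<subseteq> {S. subspace S \<and> S \<subseteq> W \<and> \<not> S \<subseteq> H}" using into by blast
  then show ?thesis using card_inj_on_le[OF inj _ fin] by blast
qed

lemma subspace_zero: "subspace {0::'a}"
  by (simp add: subspace_def)

lemma core:
  assumes W: "subspace (W::'a set)" and H: "subspace H" and HW: "H \<subseteq> W"
    and x: "x \<in> W" "x \<notin> H" and sp: "span (insert x H) = W" and cW: "card W = p ^ m"
  shows "p ^ ((m - (m + 1) div 2) * ((m + 1) div 2)) \<le> card {S. subspace S \<and> S \<subseteq> W \<and> \<not> S \<subseteq> H}"
proof -
  have c1: "card W = p * card H" using card_span_insert[OF H x(2)] sp by simp
  obtain k where cH: "card H = p ^ k" using card_subspace_pow[OF H] by blast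
  have "p ^ m = p ^ Suc k" using c1 cH cW by simp
  then have mk: "m = Suc k" using pow_inj by blast
  define j where "j = (m + 1) div 2"
  have j1: "1 \<le> j" "j \<le> m" unfolding j_def using mk by simp_all
  obtain Y where Y: "subspace Y" "Y \<subseteq> H" "card Y = p ^ (m - j)"
  proof -
    have "m - j \<le> k" using j1 mk by simp
    then show ?thesis using sub_of_size[OF H cH, of "m - j"] that by blast
  qed
  define Z where "Z = span (insert x {0})"
  have Zl: "Z = line {0} x" unfolding Z_def using span_insert_eq[OF subspace_zero] .
  have xZ: "x \<in> Z" unfolding Z_def using span_sup[of "insert x {0}"] by blast
  have "insert x {0} \<subseteq> W" using x subspace_0[OF W] by blast
  then have ZW: "Z \<subseteq> W" unfolding Z_def using span_least[OF _ W] by blast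
  have ZY: "Z \<inter> Y = {0}"
  proof
    show "{0} \<subseteq> Z \<inter> Y" using subspace_0[OF subspace_span] subspace_0[OF Y(1)] unfolding Z_def by auto
    show "Z \<inter> Y \<subseteq> {0}"
    proof
      fix v assume v: "v \<in> Z \<inter> Y"
      then obtain c where c: "v = smul c x" "c < p" unfolding Zl line_def by auto
      show "v \<in> {0}"
      proof (cases "c = 0")
        case True then show ?thesis using c by simp
      next
        case False
        then have "c mod p \<noteq> 0" using c by simp
        moreover have "smul c x \<in> H" using v c Y(2) by blast
        ultimately have "x \<in> H" using subspace_smul_cancel[OF H] by blast
        then show ?thesis using x by blast
      qed
    qed
  qed
  obtain X where X: "subspace X" "Z \<subseteq> X" "X \<subseteq> W" "X \<inter> Y = {0}" "ssum X Y = W"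
    using complement[OF W Y(1) _ subspace_span[of "insert x {0}"]] Y(2) HW ZW ZY unfolding Z_def by blast
  have "card W = card X * card Y" using card_ssum[OF X(1) Y(1) X(4)] X(5) by simp
  then have "card X * p ^ (m - j) = p ^ j * p ^ (m - j)" using cW Y(3) j1
    by (simp add: power_add[symmetric])
  then have cX: "card X = p ^ j" using p_gt1 by simp
  have "card Y ^ j \<le> card (homs X Y)" using hom_count[OF X(1) Y(1) cX] .
  moreover have "card Y ^ j = p ^ ((m - j) * j)" using Y(3) by (simp add: power_mult)
  moreover have "card (homs X Y) \<le> card {S. subspace S \<and> S \<subseteq> W \<and> \<not> S \<subseteq> H}"
    using graph_count[OF W X(1) Y(1) H X(3) _ X(4) Y(2)] Y(2) HW xZ X(2) x(2) by blast
  ultimately show ?thesis unfolding j_def by simp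
qed

end


lemma nprod_Cons: "nprod a (y # ys) = y * nprod a ys"
  by (simp add: nprod_def)

lemma nprod_Nil: "nprod a [] = a"
  by (simp add: nprod_def)

lemma nprod_mult: "nprod (b * a) xs = b * nprod a xs"
  by (induction xs) (simp_all add: nprod_def algebra_simps)

lemma nprod_add: "nprod (a + b) xs = nprod a xs + nprod b xs"
  by (induction xs) (simp_all add: nprod_def algebra_simps)

lemma nprod_neg: "nprod (- a) xs = - nprod a xs"
  by (induction xs) (simp_all add: nprod_def)

lemma nprod_diff: "nprod (a - b) xs = nprod a xs - nprod b xs"
  by (induction xs) (simp_all add: nprod_def right_diff_distrib)

lemma nprod_zero: "nprod 0 xs = 0"
  by (induction xs) (simp_all add: nprod_def)

lemma ideal_subspace: "is_ideal I \<Longrightarrow> subspace I"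
  by (simp add: is_ideal_def)

lemma ideal_mult: "is_ideal I \<Longrightarrow> x \<in> I \<Longrightarrow> a * x \<in> I"
  by (simp add: is_ideal_def)

lemma ideal_nprod: "is_ideal I \<Longrightarrow> x \<in> I \<Longrightarrow> nprod x xs \<in> I"
  by (induction xs) (simp_all add: nprod_Cons nprod_Nil ideal_mult)

lemma Nset_ideal: "is_ideal (Nset k)"
  unfolding is_ideal_def subspace_def Nset_def
  by (simp add: nprod_add nprod_neg nprod_zero nprod_mult)

lemma Nset_mono: "Nset k \<subseteq> (Nset (Suc k) :: 'a::comm_ring set)"
proof
  fix a :: 'a assume a: "a \<in> Nset k"
  show "a \<in> Nset (Suc k)" unfolding Nset_def
  proof (clarify)
    fix xs :: "'a list" assume "length xs = Suc k"
    then obtain y ys where "xs = y # ys" "length ys = k" by (cases xs) auto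
    then show "nprod a xs = 0" using a unfolding Nset_def by (simp add: nprod_Cons)
  qed
qed

lemma Nset_0: "Nset 0 = {0}"
  unfolding Nset_def by (auto simp: nprod_Nil)

definition igen :: "'a::comm_ring set \<Rightarrow> 'a set" where
  "igen S = \<Inter> {J. is_ideal J \<and> S \<subseteq> J}"

lemma igen_ideal: "is_ideal (igen S)"
  unfolding igen_def is_ideal_def subspace_def by auto

lemma igen_sup: "S \<subseteq> igen S"
  unfolding igen_def by auto

lemma igen_least: "is_ideal J \<Longrightarrow> S \<subseteq> J \<Longrightarrow> igen S \<subseteq> J"
  unfolding igen_def by auto

definition Hx :: "'a::comm_ring \<Rightarrow> 'a set" where
  "Hx x = range (\<lambda>a. a * x)"

definition Wx :: "'a::comm_ring \<Rightarrow> 'a set" where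
  "Wx x = span (insert x (range (\<lambda>a. a * x)))"

lemma subspace_Hx: "subspace (Hx x)"
  unfolding subspace_def Hx_def
proof (intro conjI ballI)
  show "0 \<in> range (\<lambda>a. a * x)" by (rule image_eqI[where x=0]) auto
next
  fix u v assume "u \<in> range (\<lambda>a. a * x)" "v \<in> range (\<lambda>a. a * x)"
  then obtain a b where "u = a * x" "v = b * x" by blast
  then show "u + v \<in> range (\<lambda>a. a * x)" by (auto intro!: image_eqI[where x="a + b"] simp: algebra_simps)
next
  fix u assume "u \<in> range (\<lambda>a. a * x)"
  then obtain a where "u = a * x" by blast
  then show "- u \<in> range (\<lambda>a. a * x)" by (auto intro!: image_eqI[where x="- a"])
qed

lemma Wx_sub_ideal: assumes "is_ideal I" "x \<in> I" shows "Wx x \<subseteq> I"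
proof -
  have "insert x (range (\<lambda>a. a * x)) \<subseteq> I" using assms ideal_mult[OF assms] by blast
  then show ?thesis unfolding Wx_def by (rule span_least[OF _ ideal_subspace[OF assms(1)]])
qed

lemma delta_mono: "a \<le> b \<Longrightarrow> delta a \<le> delta b"
  unfolding delta_def by (intro div_le_mono power_mono) auto

lemma delta_eq: "delta m = (m - (m + 1) div 2) * ((m + 1) div 2)"
proof -
  obtain k where "m = 2 * k \<or> m = 2 * k + 1" by (metis oddE evenE)
  then show ?thesis
  proof
    assume m: "m = 2 * k"
    have "m ^ 2 = 4 * (k * k)" using m by (simp add: power2_eq_square)
    then show ?thesis unfolding delta_def using m by simp
  next
    assume m: "m = 2 * k + 1"
    have "m ^ 2 = 4 * (k * k + k) + 1" using m by (simp add: power2_eq_square algebra_simps)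
    moreover have "(m + 1) div 2 = k + 1" using m by simp
    moreover have "m - (k + 1) = k" using m by simp
    ultimately show ?thesis unfolding delta_def by (simp add: algebra_simps)
  qed
qed

locale nilalg = fpalg p ty for p :: nat and ty :: "'a::{comm_ring,finite} itself" +
  fixes e :: nat
  assumes nil: "\<forall>x (xs::'a list). length xs = e \<longrightarrow> nprod x xs = 0"
begin

lemma nprod_rep_self: "x = a * x \<Longrightarrow> nprod x (replicate n a) = (x::'a)"
  by (induction n) (simp_all add: nprod_Cons nprod_Nil)

lemma x_notin_Hx: assumes "(x::'a) \<noteq> 0" shows "x \<notin> Hx x"
proof
  assume "x \<in> Hx x"
  then obtain a where "x = a * x" unfolding Hx_def by blast
  then have "nprod x (replicate e a) = x" by (rule nprod_rep_self)
  moreover have "nprod x (replicate e a) = 0" using nil by simp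
  ultimately show False using assms by simp
qed

lemma Wx_Hx: "Wx x = span (insert x (Hx x))"
  unfolding Wx_def Hx_def ..

lemma generate:
  assumes I: "is_ideal (I::'a set)" and xI: "x \<in> I"
    and R: "subspace R" and RI: "R \<subseteq> I" and RW: "ssum R (Wx x) = I"
    and S: "subspace S" and SW: "S \<subseteq> Wx x" and SH: "\<not> S \<subseteq> Hx x"
  shows "igen (ssum S R) = I"
proof
  have WI: "Wx x \<subseteq> I" using Wx_sub_ideal[OF I xI] .
  show "igen (ssum S R) \<subseteq> I"
    using igen_least[OF I] ssum_sub[of S I R] SW WI RI ideal_subspace[OF I] by blast
  let ?J = "igen (ssum S R)"
  have J: "is_ideal ?J" by (rule igen_ideal)
  have SJ: "S \<subseteq> ?J" using ssum_left[OF R] igen_sup by blast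
  have RJ: "R \<subseteq> ?J" using ssum_right[OF S] igen_sup by blast
  obtain y where y: "y \<in> S" "y \<notin> Hx x" using SH by blast
  have "y \<in> line (Hx x) x" using y SW unfolding Wx_Hx span_insert_eq[OF subspace_Hx] by blast
  then obtain h c where hc: "h \<in> Hx x" "c < p" "y = h + smul c x" unfolding line_def by auto
  have "c \<noteq> 0"
  proof
    assume "c = 0"
    then have "y = h" using hc by simp
    then show False using hc y by simp
  qed
  then have "c mod p \<noteq> 0" using hc by simp
  then obtain k where k: "\<And>z::'a. smul k (smul c z) = z" using smul_inv by blast
  obtain a where a: "h = a * x" using hc unfolding Hx_def by blast
  define b where "b = - smul k a"
  have "smul k y = smul k a * x + x" using hc a k by (simp add: smul_add smul_mult_left2)
  then have zJ: "x - b * x \<in> ?J"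
    using subspace_smul[OF ideal_subspace[OF J], of y k] y SJ unfolding b_def by (auto simp: algebra_simps)
  have step: "x - nprod x (replicate n b) \<in> ?J" for n
  proof (induction n)
    case 0 then show ?case using subspace_0[OF ideal_subspace[OF J]] by (simp add: nprod_Nil)
  next
    case (Suc n)
    have B0: "nprod (x - b * x) (replicate n b) \<in> ?J" using ideal_nprod[OF J zJ] .
    have "nprod (x - b * x) (replicate n b) = nprod x (replicate n b) - nprod x (replicate (Suc n) b)"
      by (simp add: nprod_diff nprod_mult nprod_Cons)
    with B0 have B: "nprod x (replicate n b) - nprod x (replicate (Suc n) b) \<in> ?J" by simp
    have "(x - nprod x (replicate n b)) + (nprod x (replicate n b) - nprod x (replicate (Suc n) b)) \<in> ?J"
      by (rule subspace_add[OF ideal_subspace[OF J] Suc.IH B])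
    then show ?case by (simp add: algebra_simps)
  qed
  have "nprod x (replicate e b) = 0" using nil by simp
  then have "x \<in> ?J" using step[of e] by simp
  then have "Wx x \<subseteq> ?J" using Wx_sub_ideal[OF J] by blast
  then show "I \<subseteq> ?J" using RW RJ ssum_sub[OF _ _ ideal_subspace[OF J]] by blast
qed

lemma ssum_inj:
  assumes R: "subspace (R::'a set)" and W: "subspace W" and RW: "R \<inter> W = {0}"
  shows "inj_on (\<lambda>S. ssum S R) {S. subspace S \<and> S \<subseteq> W}"
proof (rule inj_onI)
  have key: "ssum S R \<inter> W = S" if S: "subspace S" "S \<subseteq> W" for S
  proof
    show "S \<subseteq> ssum S R \<inter> W" using ssum_left[OF R] S by blast
    show "ssum S R \<inter> W \<subseteq> S"
    proof
      fix z assume "z \<in> ssum S R \<inter> W"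
      then obtain s r where sr: "z = s + r" "s \<in> S" "r \<in> R" "z \<in> W" unfolding ssum_def by blast
      have "r = z - s" using sr by simp
      moreover have "z - s \<in> W" using subspace_diff[OF W sr(4)] sr(2) S by blast
      ultimately have "r \<in> R \<inter> W" using sr by simp
      then have "r = 0" using RW by blast
      then show "z \<in> S" using sr by simp
    qed
  qed
  fix S T assume "S \<in> {S. subspace S \<and> S \<subseteq> W}" "T \<in> {S. subspace S \<and> S \<subseteq> W}" "ssum S R = ssum T R"
  then show "S = T" using key by (metis mem_Collect_eq)
qed

lemma layer:
  assumes t: "1 \<le> t"
  shows "card {I::'a set. is_ideal I \<and> I \<subseteq> Nset t \<and> \<not> I \<subseteq> Nset (t - 1)} * p ^ delta (qmin t TYPE('a))
    \<le> card {S::'a set. subspace S \<and> S \<subseteq> Nset t \<and> \<not> S \<subseteq> Nset (t - 1)}"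
proof -
  let ?Id = "{I::'a set. is_ideal I \<and> I \<subseteq> Nset t \<and> \<not> I \<subseteq> Nset (t - 1)}"
  let ?Sub = "{S::'a set. subspace S \<and> S \<subseteq> Nset t \<and> \<not> S \<subseteq> Nset (t - 1)}"
  define F where "F I = {S \<in> ?Sub. igen S = I}" for I
  have fibre: "p ^ delta (qmin t TYPE('a)) \<le> card (F I)" if I: "I \<in> ?Id" for I
  proof -
    have Ii: "is_ideal I" and It: "I \<subseteq> Nset t" and In: "\<not> I \<subseteq> Nset (t - 1)" using I by auto
    obtain x where x: "x \<in> I" "x \<notin> Nset (t - 1)" using In by blast
    have x0: "x \<noteq> 0" using x subspace_0[OF ideal_subspace[OF Nset_ideal]] by metis
    have xt: "x \<in> Nset t - Nset (t - 1)" using x It by blast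
    have "qmin t TYPE('a) \<le> qdim x" unfolding qmin_def using xt by (intro Min_le) auto
    moreover obtain m where m: "card (Wx x) = p ^ m" using card_subspace_pow[OF subspace_span[of "insert x (range (\<lambda>a. a * x))"]] unfolding Wx_def by blast
    moreover have "qdim x \<le> m" unfolding qdim_def using fdim_le[OF subspace_span m[unfolded Wx_def]] .
    ultimately have dq: "delta (qmin t TYPE('a)) \<le> delta m" using delta_mono by (meson le_trans)
    have sW: "subspace (Wx x)" unfolding Wx_def by (rule subspace_span)
    have xW: "x \<in> Wx x" unfolding Wx_def by (rule subsetD[OF span_sup insertI1])
    have HW: "Hx x \<subseteq> Wx x" unfolding Wx_def Hx_def using span_sup[of "insert x (range (\<lambda>a. a * x))"] by blast
    have cnt: "p ^ delta m \<le> card {S. subspace S \<and> S \<subseteq> Wx x \<and> \<not> S \<subseteq> Hx x}"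
      using core[OF sW subspace_Hx HW xW x_notin_Hx[OF x0] Wx_Hx[symmetric] m] delta_eq[of m] by simp
    have WI: "Wx x \<subseteq> I" using Wx_sub_ideal[OF Ii x(1)] .
    have z1: "{0} \<inter> Wx x = {0}" using subspace_0[OF sW] by blast
    have z2: "{0} \<subseteq> I" using subspace_0[OF ideal_subspace[OF Ii]] by blast
    obtain R where R: "subspace R" "{0} \<subseteq> R" "R \<subseteq> I" "R \<inter> Wx x = {0}" "ssum R (Wx x) = I"
      using complement[OF ideal_subspace[OF Ii] sW WI subspace_zero z2 z1] by blast
    have into: "(\<lambda>S. ssum S R) ` {S. subspace S \<and> S \<subseteq> Wx x \<and> \<not> S \<subseteq> Hx x} \<subseteq> F I"
    proof
      fix T assume "T \<in> (\<lambda>S. ssum S R) ` {S. subspace S \<and> S \<subseteq> Wx x \<and> \<not> S \<subseteq> Hx x}"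
      then obtain S where S: "subspace S" "S \<subseteq> Wx x" "\<not> S \<subseteq> Hx x" "T = ssum S R" by blast
      have g: "igen T = I" using generate[OF Ii x(1) R(1) R(3) R(5) S(1-3)] S(4) by simp
      have sT: "subspace T" using subspace_ssum[OF S(1) R(1)] S(4) by simp
      have TI: "T \<subseteq> I" using S WI R(3) ssum_sub[OF _ _ ideal_subspace[OF Ii]] by blast
      have "\<not> T \<subseteq> Nset (t - 1)"
      proof
        assume "T \<subseteq> Nset (t - 1)"
        then have "igen T \<subseteq> Nset (t - 1)" using igen_least[OF Nset_ideal] by blast
        then show False using g In by simp
      qed
      then show "T \<in> F I" unfolding F_def using g sT TI It by blast
    qed
    have inj: "inj_on (\<lambda>S. ssum S R) {S. subspace S \<and> S \<subseteq> Wx x \<and> \<not> S \<subseteq> Hx x}"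
      by (rule inj_on_subset[OF ssum_inj[OF R(1) sW R(4)]]) auto
    have "card {S. subspace S \<and> S \<subseteq> Wx x \<and> \<not> S \<subseteq> Hx x} \<le> card (F I)"
      using card_inj_on_le[OF inj into] by simp
    moreover have "p ^ delta (qmin t TYPE('a)) \<le> p ^ delta m" using dq p_gt1 by (simp add: power_increasing)
    ultimately show ?thesis using cnt by linarith
  qed
  have disj: "\<forall>I\<in>?Id. \<forall>J\<in>?Id. I \<noteq> J \<longrightarrow> F I \<inter> F J = {}" unfolding F_def by auto
  have sub: "(\<Union>I\<in>?Id. F I) \<subseteq> ?Sub" unfolding F_def by auto
  have "card ?Id * p ^ delta (qmin t TYPE('a)) = (\<Sum>I\<in>?Id. p ^ delta (qmin t TYPE('a)))" by simp
  also have "\<dots> \<le> (\<Sum>I\<in>?Id. card (F I))" using fibre by (intro sum_mono) auto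
  also have "\<dots> = card (\<Union>I\<in>?Id. F I)" using card_UN_disjoint[OF _ _ disj] by simp
  also have "\<dots> \<le> card ?Sub" using sub by (intro card_mono) auto
  finally show ?thesis .
qed

end


lemma abel:
  fixes a s :: "nat \<Rightarrow> real"
  shows "(\<Sum>t=1..n. (a t - a (t+1)) * s t) + a (Suc n) * s (Suc n)
    = a 1 * s 0 + (\<Sum>t=1..Suc n. a t * (s t - s (t - 1)))"
proof (induction n)
  case 0 then show ?case by (simp add: algebra_simps)
next
  case (Suc n)
  have "(\<Sum>t=1..Suc n. (a t - a (t+1)) * s t) + a (Suc (Suc n)) * s (Suc (Suc n))
     = ((\<Sum>t=1..n. (a t - a (t+1)) * s t) + a (Suc n) * s (Suc n))
       + a (Suc (Suc n)) * (s (Suc (Suc n)) - s (Suc n))"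
    by (simp add: algebra_simps)
  also have "\<dots> = a 1 * s 0 + (\<Sum>t=1..Suc (Suc n). a t * (s t - s (t - 1)))"
    using Suc by simp
  finally show ?case .
qed

context nilalg
begin

lemma strat:
  assumes P0: "P {0}" and Pz: "\<And>S. P S \<Longrightarrow> (0::'a) \<in> S"
  shows "card {S::'a set. P S \<and> S \<subseteq> Nset n}
    = 1 + (\<Sum>t=1..n. card {S::'a set. P S \<and> S \<subseteq> Nset t \<and> \<not> S \<subseteq> Nset (t - 1)})"
proof (induction n)
  case 0
  have "{S::'a set. P S \<and> S \<subseteq> Nset 0} = {{0}}" using P0 Pz unfolding Nset_0 by auto
  then show ?case by simp
next
  case (Suc n)
  have "{S::'a set. P S \<and> S \<subseteq> Nset (Suc n)}
     = {S. P S \<and> S \<subseteq> Nset n} \<union> {S. P S \<and> S \<subseteq> Nset (Suc n) \<and> \<not> S \<subseteq> Nset n}"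
    using Nset_mono[of n] by auto
  moreover have "{S::'a set. P S \<and> S \<subseteq> Nset n} \<inter> {S. P S \<and> S \<subseteq> Nset (Suc n) \<and> \<not> S \<subseteq> Nset n} = {}"
    by auto
  ultimately have "card {S::'a set. P S \<and> S \<subseteq> Nset (Suc n)}
     = card {S::'a set. P S \<and> S \<subseteq> Nset n} + card {S::'a set. P S \<and> S \<subseteq> Nset (Suc n) \<and> \<not> S \<subseteq> Nset n}"
    by (simp add: card_Un_disjoint)
  then show ?case using Suc by simp
qed

lemma qmin1:
  assumes "\<exists>x (xs::'a list). length xs = e - 1 \<and> nprod x xs \<noteq> 0" and e1: "e \<ge> 1"
  shows "delta (qmin 1 TYPE('a)) = 0"
proof -
  obtain x and xs :: "'a list" where xs: "length xs = e - 1" "nprod x xs \<noteq> 0" using assms by blast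
  define y where "y = nprod x xs"
  have ay: "a * y = 0" for a
  proof -
    have "length (a # xs) = e" using xs e1 by simp
    then have "nprod x (a # xs) = 0" using nil by blast
    then show ?thesis unfolding y_def by (simp add: nprod_Cons)
  qed
  have y1: "y \<in> Nset 1" unfolding Nset_def
  proof (clarify)
    fix zs :: "'a list" assume "length zs = 1"
    then obtain z where "zs = [z]" by (cases zs) auto
    then show "nprod y zs = 0" using ay by (simp add: nprod_Cons nprod_Nil)
  qed
  have y0: "y \<noteq> 0" using xs unfolding y_def by simp
  have N0: "Nset 0 = ({0}::'a set)" by (rule Nset_0)
  have "y \<in> Nset 1 - Nset (1 - 1)" using y1 y0 N0 by simp
  then have q: "qmin 1 TYPE('a) \<le> qdim y" unfolding qmin_def by (intro Min_le) auto
  have Hy: "Hx y = {0}" unfolding Hx_def using ay by auto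
  have "card (Wx y) = p * card (Hx y)"
    unfolding Wx_Hx by (rule card_span_insert[OF subspace_Hx x_notin_Hx[OF y0]])
  then have "card (Wx y) = p ^ 1" using Hy by simp
  then have "fdim (Wx y) \<le> 1" using fdim_le[OF subspace_span] unfolding Wx_def by blast
  then have "qdim y \<le> 1" unfolding qdim_def Wx_def .
  then have "qmin 1 TYPE('a) \<le> 1" using q by simp
  then have "qmin 1 TYPE('a) = 0 \<or> qmin 1 TYPE('a) = 1" by auto
  then show ?thesis unfolding delta_def by auto
qed

end

theorem corollary2p5:
  fixes p e :: nat
  assumes "prime p"
    and "char_exp p TYPE('a::{comm_ring,finite})"
    and "e \<ge> 1"
    and "\<exists>x (xs::'a list). length xs = e - 1 \<and> nprod x xs \<noteq> 0"
    and "\<forall>x (xs::'a list). length xs = e \<longrightarrow> nprod x xs = 0"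
  shows "real (num_ideals TYPE('a))
    \<le> (\<Sum>t=1..e-1. (1 / real p ^ delta (qmin t TYPE('a))
                     - 1 / real p ^ delta (qmin (t+1) TYPE('a))) * real (num_sub (Nset t :: 'a set)))
      + 1 / real p ^ delta (qmin e TYPE('a)) * real (num_sub (Nset e :: 'a set))"
proof -
  have charp: "\<And>x::'a. smul p x = 0" using assms(2) unfolding char_exp_def by (simp add: sum_smul)
  interpret nilalg p "TYPE('a)" e
    by unfold_locales (use assms(1,5) charp in auto)
  define a where "a t = 1 / real p ^ delta (qmin t TYPE('a))" for t
  define s where "s t = real (num_sub (Nset t :: 'a set))" for t
  define d where "d t = card {I::'a set. is_ideal I \<and> I \<subseteq> Nset t \<and> \<not> I \<subseteq> Nset (t - 1)}" for t
  define c where "c t = card {S::'a set. subspace S \<and> S \<subseteq> Nset t \<and> \<not> S \<subseteq> Nset (t - 1)}" for t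
  have pos: "0 < real p ^ k" for k using p_gt1 by simp
  have NeU: "Nset e = (UNIV :: 'a set)" using assms(5) unfolding Nset_def by auto
  have Pid0: "is_ideal {0::'a}" unfolding is_ideal_def subspace_def by simp
  have ni: "num_ideals TYPE('a) = 1 + (\<Sum>t=1..e. d t)"
  proof -
    have "num_ideals TYPE('a) = card {I::'a set. is_ideal I \<and> I \<subseteq> Nset e}"
      unfolding num_ideals_def NeU by simp
    also have "\<dots> = 1 + (\<Sum>t=1..e. d t)" unfolding d_def
      by (rule strat[of is_ideal e]) (use Pid0 in \<open>auto simp: is_ideal_def subspace_def\<close>)
    finally show ?thesis .
  qed
  have ns: "num_sub (Nset n :: 'a set) = 1 + (\<Sum>t=1..n. c t)" for n
  proof -
    have "num_sub (Nset n :: 'a set) = card {S::'a set. subspace S \<and> S \<subseteq> Nset n}"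
      unfolding num_sub_def by (rule arg_cong[where f=card]) auto
    also have "\<dots> = 1 + (\<Sum>t=1..n. c t)" unfolding c_def
      by (rule strat[of subspace n]) (auto simp: subspace_def)
    finally show ?thesis .
  qed
  have e0: "{1..0::nat} = {}" by simp
  have n01: "num_sub (Nset 0 :: 'a set) = 1" using ns[of 0] unfolding e0 by (simp only: sum.empty add_0_right)
  have s0: "s 0 = 1"
  proof -
    have "s 0 = real (num_sub (Nset 0 :: 'a set))" by (rule s_def)
    also have "\<dots> = real (1::nat)" using n01 by (rule arg_cong)
    also have "\<dots> = 1" by (rule of_nat_1)
    finally show ?thesis .
  qed
  have sdiff: "s t - s (t - 1) = real (c t)" if "1 \<le> t" for t
  proof -
    define u where "u = t - 1"
    have u: "t = Suc u" using that unfolding u_def by simp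
    have "(\<Sum>t=1..Suc u. c t) = c (Suc u) + (\<Sum>t=1..u. c t)" by (rule sum.nat_ivl_Suc') simp
    moreover have "num_sub (Nset t :: 'a set) = 1 + (\<Sum>t=1..Suc u. c t)" using ns[of t] u by simp
    moreover have "num_sub (Nset (t - 1) :: 'a set) = 1 + (\<Sum>t=1..u. c t)" using ns[of u] u by simp
    moreover have "c t = c (Suc u)" using u by simp
    ultimately have "num_sub (Nset t :: 'a set) = num_sub (Nset (t - 1) :: 'a set) + c t"
      by linarith
    then show ?thesis unfolding s_def by (simp only: of_nat_add add_diff_cancel_left')
  qed
  have a1: "a 1 = 1" unfolding a_def using qmin1[OF assms(4) assms(3)] by simp
  have dle: "real (d t) \<le> a t * real (c t)" if "1 \<le> t" for t
  proof -
    have "d t * p ^ delta (qmin t TYPE('a)) \<le> c t" unfolding d_def c_def using layer[OF that] .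
    then have "real (d t) * real p ^ delta (qmin t TYPE('a)) \<le> real (c t)"
      by (metis of_nat_le_iff of_nat_mult of_nat_power)
    then show ?thesis unfolding a_def using pos[of "delta (qmin t TYPE('a))"]
      by (simp add: pos_le_divide_eq)
  qed
  obtain n where n: "e = Suc n" using assms(3) by (cases e) auto
  have "(\<Sum>t=1..e-1. (a t - a (t+1)) * s t) + a e * s e
      = a 1 * s 0 + (\<Sum>t=1..e. a t * (s t - s (t - 1)))"
    using abel[where a=a and s=s and n=n] n by simp
  also have "\<dots> = 1 + (\<Sum>t=1..e. a t * real (c t))" using a1 s0 sdiff by simp
  also have "\<dots> \<ge> 1 + (\<Sum>t=1..e. real (d t))"
  proof -
    have "(\<Sum>t=1..e. real (d t)) \<le> (\<Sum>t=1..e. a t * real (c t))"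
      by (rule sum_mono) (use dle in auto)
    then show ?thesis by simp
  qed
  finally have main: "1 + (\<Sum>t=1..e. real (d t)) \<le> (\<Sum>t=1..e-1. (a t - a (t+1)) * s t) + a e * s e" .
  have "real (num_ideals TYPE('a)) = 1 + (\<Sum>t=1..e. real (d t))" using ni by simp
  then show ?thesis using main unfolding a_def s_def by simp
qed


end
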